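(* Let $X$ be a finite rack. There exists $N_0$ (depending on $X$) such that for every $N\ge N_0$ and every $w\in S_X$, left multiplication by $w$ is an injective map from $S_X^*(N)$ to itself.
   Context: A rack is a set $X$ with an operation $x^y$ such that $x\mapsto x^y$ is bijective for each $y$ and $(z^x)^y=(z^y)^{x^y}$. Its connected components $C_1,\dots,C_k$ are the classes of the smallest equivalence relation with $x\sim x^y$. $B_n$ acts on $X^n$ from the right by $(\dots,x_i,x_{i+1},\dots)^{\sigma_i}=(\dots,x_{i+1},x_i^{x_{i+1}},\dots)$. The structure semigroup is $S_X=\bigsqcup_{n\ge1}X^n/B_n$ with multiplication given by concatenation of representatives. For nonnegative $n_1,\dots,n_k$ with sum $n$, $X^*(n_1,\dots,n_k)$ is the set of $(x_1,\dots,x_n)\in X^n$ having exactly $n_j$ entries in $C_j$ for each $j$ and whose entries generate $X$ (lie in no proper subset closed under $x^y$). $S_X^*(N)=\bigcup_{n_1,\dots,n_k\ge N}X^*(n_1,\dots,n_k)/B_n$, which is an ideal of $S_X$. *)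

theory Defs
  imports Main
begin

text \<open>A rack on the (finite) type 'a, with operation op x y = x^y.\<close>
definition is_rack :: "('a \<Rightarrow> 'a \<Rightarrow> 'a) \<Rightarrow> bool" where
  "is_rack op \<longleftrightarrow> (\<forall>y. bij (\<lambda>x. op x y)) \<and>
     (\<forall>x y z. op (op z x) y = op (op z y) (op x y))"

definition comp_rel :: "('a \<Rightarrow> 'a \<Rightarrow> 'a) \<Rightarrow> ('a \<times> 'a) set" where
  "comp_rel op = (let R = {(x, op x y) | x y. True} in (R \<union> R\<inverse>)\<^sup>*)"

definition rack_components :: "('a \<Rightarrow> 'a \<Rightarrow> 'a) \<Rightarrow> 'a set set" where
  "rack_components op = UNIV // comp_rel op"

definition braid_step :: "('a \<Rightarrow> 'a \<Rightarrow> 'a) \<Rightarrow> 'a list \<Rightarrow> 'a list \<Rightarrow> bool" where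
  "braid_step op xs ys \<longleftrightarrow>
     (\<exists>u v a b. xs = u @ [a, b] @ v \<and> ys = u @ [b, op a b] @ v)"

definition braid_equiv :: "('a \<Rightarrow> 'a \<Rightarrow> 'a) \<Rightarrow> 'a list \<Rightarrow> 'a list \<Rightarrow> bool" where
  "braid_equiv op = (sup (braid_step op) (braid_step op)\<inverse>\<inverse>)\<^sup>*\<^sup>*"

definition braid_class :: "('a \<Rightarrow> 'a \<Rightarrow> 'a) \<Rightarrow> 'a list \<Rightarrow> 'a list set" where
  "braid_class op xs = {ys. braid_equiv op xs ys}"

text \<open>The structure semigroup S_X = disjoint union over n \<ge> 1 of X^n / B_n.\<close>
definition structure_semigroup :: "('a \<Rightarrow> 'a \<Rightarrow> 'a) \<Rightarrow> 'a list set set" where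
  "structure_semigroup op = {braid_class op xs | xs. xs \<noteq> []}"

definition sg_mult :: "('a \<Rightarrow> 'a \<Rightarrow> 'a) \<Rightarrow> 'a list set \<Rightarrow> 'a list set \<Rightarrow> 'a list set" where
  "sg_mult op w z = \<Union>{braid_class op (u @ v) | u v. u \<in> w \<and> v \<in> z}"

definition generates :: "('a \<Rightarrow> 'a \<Rightarrow> 'a) \<Rightarrow> 'a list \<Rightarrow> bool" where
  "generates op xs \<longleftrightarrow>
     \<not> (\<exists>Y. Y \<subset> UNIV \<and> set xs \<subseteq> Y \<and> (\<forall>a\<in>Y. \<forall>b\<in>Y. op a b \<in> Y))"

definition SX_star :: "('a \<Rightarrow> 'a \<Rightarrow> 'a) \<Rightarrow> nat \<Rightarrow> 'a list set set" where
  "SX_star op N = {braid_class op xs | xs. xs \<noteq> [] \<and> generates op xs \<and>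
      (\<forall>C\<in>rack_components op. card {i. i < length xs \<and> xs ! i \<in> C} \<ge> N)}"

end

theory Submission
  imports Defs
begin

context
  fixes op :: "'a::finite \<Rightarrow> 'a \<Rightarrow> 'a"
  assumes rack: "is_rack op"
begin

lemma rack_ax: "op (op z x) y = op (op z y) (op x y)"
  using rack unfolding is_rack_def by blast

lemma rack_bij: "bij (\<lambda>x. op x y)"
  using rack unfolding is_rack_def by blast

lemma be_refl[simp]: "braid_equiv op xs xs"
  unfolding braid_equiv_def by simp

lemma be_sym: "braid_equiv op xs ys \<Longrightarrow> braid_equiv op ys xs"
proof -
  have "symp (sup (braid_step op) (braid_step op)\<inverse>\<inverse>)"
    by (auto simp: symp_def)
  hence "symp (sup (braid_step op) (braid_step op)\<inverse>\<inverse>)\<^sup>*\<^sup>*"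
    by (rule symp_rtranclp)
  thus "braid_equiv op xs ys \<Longrightarrow> braid_equiv op ys xs"
    unfolding braid_equiv_def by (meson sympD)
qed

lemma be_trans: "braid_equiv op xs ys \<Longrightarrow> braid_equiv op ys zs \<Longrightarrow> braid_equiv op xs zs"
  unfolding braid_equiv_def by (rule rtranclp_trans)

lemma be_step: "braid_step op xs ys \<Longrightarrow> braid_equiv op xs ys"
  unfolding braid_equiv_def by auto

lemma be_swap: "braid_equiv op (u @ a # b # v) (u @ b # op a b # v)"
  by (rule be_step) (auto simp: braid_step_def)

lemma bs_cong: "braid_step op xs ys \<Longrightarrow> braid_step op (p @ xs @ q) (p @ ys @ q)"
  unfolding braid_step_def by (metis append.assoc)

lemma be_cong: "braid_equiv op xs ys \<Longrightarrow> braid_equiv op (p @ xs @ q) (p @ ys @ q)"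
  unfolding braid_equiv_def
proof (induction rule: rtranclp_induct)
  case base thus ?case by simp
next
  case (step y z)
  from step.hyps(2) have "(sup (braid_step op) (braid_step op)\<inverse>\<inverse>) (p @ y @ q) (p @ z @ q)"
    using bs_cong by auto
  with step.IH show ?case by (rule rtranclp.rtrancl_into_rtrancl)
qed

lemma be_cons: "braid_equiv op xs ys \<Longrightarrow> braid_equiv op (c # xs) (c # ys)"
  using be_cong[of xs ys "[c]" "[]"] by simp

lemma be_appL: "braid_equiv op xs ys \<Longrightarrow> braid_equiv op (p @ xs) (p @ ys)"
  using be_cong[of xs ys p "[]"] by simp

lemma be_appR: "braid_equiv op xs ys \<Longrightarrow> braid_equiv op (xs @ q) (ys @ q)"
  using be_cong[of xs ys "[]" q] by simp

definition endo :: "('a \<Rightarrow> 'a) \<Rightarrow> bool" where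
  "endo g \<longleftrightarrow> (\<forall>a b. g (op a b) = op (g a) (g b))"

lemma be_map: assumes "endo g" shows "braid_equiv op xs ys \<Longrightarrow> braid_equiv op (map g xs) (map g ys)"
  unfolding braid_equiv_def
proof (induction rule: rtranclp_induct)
  case base thus ?case by simp
next
  case (step y z)
  have "braid_step op y z \<Longrightarrow> braid_step op (map g y) (map g z)" for y z
    using assms unfolding braid_step_def endo_def by force
  with step.hyps(2) have "(sup (braid_step op) (braid_step op)\<inverse>\<inverse>) (map g y) (map g z)"
    by auto
  with step.IH show ?case by (rule rtranclp.rtrancl_into_rtrancl)
qed

lemma endo_phi: "endo (\<lambda>x. op x s)"
  unfolding endo_def using rack_ax by blast

lemma endo_comp: "endo f \<Longrightarrow> endo g \<Longrightarrow> endo (f \<circ> g)"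
  unfolding endo_def by simp

lemma endo_id: "endo id" unfolding endo_def by simp

lemma endo_pow: "endo f \<Longrightarrow> endo (f ^^ n)"
  by (induction n) (auto simp: endo_id endo_comp)

definition dact :: "'a list \<Rightarrow> 'a \<Rightarrow> 'a" where
  "dact p a = foldl op a p"

lemma dact_Nil[simp]: "dact [] a = a" by (simp add: dact_def)
lemma dact_Cons[simp]: "dact (c # p) a = dact p (op a c)" by (simp add: dact_def)
lemma dact_append[simp]: "dact (p @ q) a = dact q (dact p a)" by (simp add: dact_def)

lemma endo_dact: "endo (dact p)"
proof (induction p)
  case Nil thus ?case by (simp add: endo_def)
next
  case (Cons c p)
  have "dact (c # p) = dact p \<circ> (\<lambda>x. op x c)" by (auto simp: fun_eq_iff)
  thus ?case using Cons endo_comp endo_phi by metis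
qed

lemma dact_replicate: "dact (replicate n z) a = ((\<lambda>x. op x z) ^^ n) a"
  by (induction n arbitrary: a) (simp_all add: funpow_Suc_right del: funpow.simps)

lemma L2: "braid_equiv op (p @ [a]) (a # map (\<lambda>z. op z a) p)"
proof (induction p)
  case Nil thus ?case by simp
next
  case (Cons c p)
  have "braid_equiv op (c # (p @ [a])) (c # a # map (\<lambda>z. op z a) p)"
    using Cons be_cons by blast
  moreover have "braid_equiv op (c # a # map (\<lambda>z. op z a) p) (a # op c a # map (\<lambda>z. op z a) p)"
    using be_swap[of "[]"] by simp
  ultimately show ?case using be_trans by simp
qed

lemma L3: "braid_equiv op (a # p) (p @ [dact p a])"
proof (induction p arbitrary: a)
  case Nil thus ?case by simp
next
  case (Cons c p)
  have "braid_equiv op (a # c # p) (c # op a c # p)"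
    using be_swap[of "[]"] by simp
  moreover have "braid_equiv op (c # op a c # p) (c # (p @ [dact p (op a c)]))"
    using Cons be_cons by blast
  ultimately show ?case using be_trans by simp
qed

lemma Lq: "braid_equiv op (q @ p) (p @ map (dact p) q)"
proof (induction q)
  case Nil thus ?case by simp
next
  case (Cons a q)
  have "braid_equiv op (a # (q @ p)) (a # (p @ map (dact p) q))"
    using Cons be_cons by blast
  moreover have "braid_equiv op ((a # p) @ map (dact p) q) ((p @ [dact p a]) @ map (dact p) q)"
    using L3 be_appR by blast
  ultimately show ?case using be_trans by simp
qed


lemma exists_order: fixes f :: "'a \<Rightarrow> 'a" assumes "bij f" shows "\<exists>k>0. f ^^ k = id"
proof -
  have "\<not> inj (\<lambda>i::nat. f ^^ i)"
  proof
    assume "inj (\<lambda>i::nat. f ^^ i)"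
    hence "finite (UNIV :: nat set)"
      using finite_imageD[of "\<lambda>i::nat. f ^^ i" UNIV] by simp
    thus False by simp
  qed
  then obtain i j where ij: "i \<noteq> j" "f ^^ i = f ^^ j" unfolding inj_def by blast
  have main: "f ^^ i = f ^^ j \<Longrightarrow> i < j \<Longrightarrow> \<exists>k>0. f ^^ k = id" for i j
  proof -
    assume e: "f ^^ i = f ^^ j" and lt: "i < j"
    have "f ^^ j = f ^^ i \<circ> f ^^ (j - i)" using lt funpow_add[of i "j - i" f] by simp
    hence "\<forall>x. (f ^^ i) x = (f ^^ i) ((f ^^ (j - i)) x)" using e by (metis comp_apply)
    moreover have "inj (f ^^ i)" using assms bij_is_inj inj_fn by blast
    ultimately have "\<forall>x. (f ^^ (j - i)) x = x" by (metis injD)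
    thus ?thesis using lt by (intro exI[of _ "j - i"]) (auto simp: fun_eq_iff)
  qed
  show ?thesis
  proof (cases "i < j")
    case True thus ?thesis using main ij by blast
  next
    case False hence "j < i" using ij by simp
    thus ?thesis using main ij by metis
  qed
qed

definition ordf :: "('a \<Rightarrow> 'a) \<Rightarrow> nat" where
  "ordf f = (SOME k. k > 0 \<and> f ^^ k = id)"

definition UK :: nat where
  "UK = (\<Prod>f\<in>{f::'a\<Rightarrow>'a. bij f}. ordf f)"

lemma ordf: "bij (f::'a\<Rightarrow>'a) \<Longrightarrow> ordf f > 0 \<and> f ^^ ordf f = id"
  unfolding ordf_def using exists_order by (rule someI_ex)

lemma UK_pos: "UK > 0"
  unfolding UK_def using ordf by (simp add: prod_pos)

lemma UK_pow: fixes f :: "'a \<Rightarrow> 'a" assumes "bij f" shows "f ^^ UK = id"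
proof -
  have "ordf f dvd UK" unfolding UK_def using assms by (intro dvd_prodI) auto
  then obtain q where "UK = ordf f * q" by blast
  thus ?thesis using ordf[OF assms] by (simp add: funpow_mult[symmetric])
qed

lemma phi_UK: "((\<lambda>x. op x s) ^^ UK) = id"
  using UK_pow rack_bij by blast

lemma phi_inv: "((\<lambda>x. op x s) ^^ (UK - 1)) (op z s) = z"
proof -
  have "((\<lambda>x. op x s) ^^ (UK - 1)) (op z s) = ((\<lambda>x. op x s) ^^ (Suc (UK - 1))) z"
    by (simp add: funpow_Suc_right del: funpow.simps)
  also have "Suc (UK - 1) = UK" using UK_pos by simp
  finally show ?thesis using phi_UK by simp
qed

lemma phi_inv2: "op (((\<lambda>x. op x s) ^^ (UK - 1)) z) s = z"
proof -
  have "op (((\<lambda>x. op x s) ^^ (UK - 1)) z) s = ((\<lambda>x. op x s) ^^ (Suc (UK - 1))) z"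
    by simp
  also have "Suc (UK - 1) = UK" using UK_pos by simp
  finally show ?thesis using phi_UK by simp
qed

lemma gen_mono: "generates op xs \<Longrightarrow> set xs \<subseteq> set ys \<Longrightarrow> generates op ys"
  unfolding generates_def by blast

lemma gen_Nil: "\<not> generates op []"
  unfolding generates_def by auto

lemma closed_pow: assumes "\<forall>a\<in>Y. \<forall>b\<in>Y. op a b \<in> Y" "b \<in> Y" "a \<in> Y"
  shows "((\<lambda>x. op x b) ^^ n) a \<in> Y"
  using assms by (induction n) auto

lemma gen_step: assumes "braid_step op xs ys" shows "generates op xs = generates op ys"
proof -
  obtain u v a b where e: "xs = u @ [a, b] @ v" "ys = u @ [b, op a b] @ v"
    using assms unfolding braid_step_def by blast
  have "(\<exists>Y. Y \<subset> UNIV \<and> set xs \<subseteq> Y \<and> (\<forall>a\<in>Y. \<forall>b\<in>Y. op a b \<in> Y)) \<longleftrightarrow>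
        (\<exists>Y. Y \<subset> UNIV \<and> set ys \<subseteq> Y \<and> (\<forall>a\<in>Y. \<forall>b\<in>Y. op a b \<in> Y))"
  proof
    assume "\<exists>Y. Y \<subset> UNIV \<and> set xs \<subseteq> Y \<and> (\<forall>a\<in>Y. \<forall>b\<in>Y. op a b \<in> Y)"
    thus "\<exists>Y. Y \<subset> UNIV \<and> set ys \<subseteq> Y \<and> (\<forall>a\<in>Y. \<forall>b\<in>Y. op a b \<in> Y)"
      using e by auto
  next
    assume "\<exists>Y. Y \<subset> UNIV \<and> set ys \<subseteq> Y \<and> (\<forall>a\<in>Y. \<forall>b\<in>Y. op a b \<in> Y)"
    then obtain Y where Y: "Y \<subset> UNIV" "set ys \<subseteq> Y" "\<forall>a\<in>Y. \<forall>b\<in>Y. op a b \<in> Y" by blast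
    have "b \<in> Y" "op a b \<in> Y" using Y e by auto
    hence "((\<lambda>x. op x b) ^^ (UK - 1)) (op a b) \<in> Y" using closed_pow Y(3) by blast
    hence "a \<in> Y" using phi_inv by simp
    thus "\<exists>Y. Y \<subset> UNIV \<and> set xs \<subseteq> Y \<and> (\<forall>a\<in>Y. \<forall>b\<in>Y. op a b \<in> Y)"
      using Y e by (intro exI[of _ Y]) auto
  qed
  thus ?thesis unfolding generates_def by blast
qed

lemma gen_be: "braid_equiv op xs ys \<Longrightarrow> generates op xs = generates op ys"
  unfolding braid_equiv_def
proof (induction rule: rtranclp_induct)
  case base thus ?case by simp
next
  case (step y z) thus ?case using gen_step by auto
qed

abbreviation comps where "comps \<equiv> rack_components op"

lemma equiv_comp: "equiv UNIV (comp_rel op)"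
proof -
  define R where "R = {(x, op x y) | x y. True}"
  have c: "comp_rel op = (R \<union> R\<inverse>)\<^sup>*" unfolding comp_rel_def R_def Let_def by simp
  have "sym ((R \<union> R\<inverse>)\<^sup>*)" by (intro sym_rtrancl) (auto simp: sym_def)
  thus ?thesis unfolding c equiv_def by (auto simp: refl_rtrancl trans_rtrancl)
qed

lemma comp_step: "(x, op x y) \<in> comp_rel op"
  unfolding comp_rel_def Let_def by (rule r_into_rtrancl) blast

lemma comp_mem: assumes "C \<in> comps" shows "op a b \<in> C \<longleftrightarrow> a \<in> C"
proof -
  obtain c where C: "C = comp_rel op `` {c}" using assms unfolding rack_components_def quotient_def by blast
  have "(a, op a b) \<in> comp_rel op" by (rule comp_step)
  moreover have "(op a b, a) \<in> comp_rel op" using comp_step equiv_comp by (meson equivE symD)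
  ultimately show ?thesis unfolding C using equiv_comp by (meson Image_singleton_iff equivE transD)
qed

definition cnt :: "'a set \<Rightarrow> 'a list \<Rightarrow> nat" where
  "cnt C xs = length (filter (\<lambda>a. a \<in> C) xs)"

definition deg :: "'a list \<Rightarrow> 'a set \<Rightarrow> nat" where
  "deg xs = (\<lambda>C. if C \<in> comps then cnt C xs else 0)"

lemma deg_step: assumes "braid_step op xs ys" shows "deg xs = deg ys"
proof -
  obtain u v a b where e: "xs = u @ [a, b] @ v" "ys = u @ [b, op a b] @ v"
    using assms unfolding braid_step_def by blast
  show ?thesis unfolding deg_def cnt_def e using comp_mem by (auto simp: fun_eq_iff)
qed

lemma deg_be: "braid_equiv op xs ys \<Longrightarrow> deg xs = deg ys"
  unfolding braid_equiv_def
proof (induction rule: rtranclp_induct)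
  case base thus ?case by simp
next
  case (step y z) thus ?case using deg_step by auto
qed

lemma deg_append: "deg (xs @ ys) C = deg xs C + deg ys C"
  unfolding deg_def cnt_def by simp

lemma comp_of: "comp_rel op `` {x} \<in> comps" "x \<in> comp_rel op `` {x}"
  unfolding rack_components_def using equiv_comp
  by (auto simp: quotient_def equiv_def refl_on_def)

lemma comp_unique: assumes "C \<in> comps" "D \<in> comps" "x \<in> C" "x \<in> D" shows "C = D"
  using quotient_disj[OF equiv_comp] assms unfolding rack_components_def by blast

lemma deg_cons: assumes "C0 \<in> comps" "x \<in> C0"
  shows "deg (x # xs) = (deg xs)(C0 := deg xs C0 + 1)"
  unfolding deg_def cnt_def using assms comp_unique by (auto simp: fun_eq_iff)

lemma finite_comps: "finite comps"
  unfolding rack_components_def by (rule finite_quotient) auto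

lemma length_deg: "length xs = (\<Sum>C\<in>comps. deg xs C)"
proof (induction xs)
  case Nil thus ?case unfolding deg_def cnt_def by simp
next
  case (Cons x xs)
  let ?C = "comp_rel op `` {x}"
  have "deg (x # xs) = (deg xs)(?C := deg xs ?C + 1)" using deg_cons comp_of by blast
  hence "(\<Sum>C\<in>comps. deg (x # xs) C) = (\<Sum>C\<in>comps. deg xs C) + 1"
    using comp_of(1) finite_comps by (simp add: sum.remove[of comps ?C] sum_Suc)
  thus ?case using Cons by simp
qed


lemma gather: "j \<le> count_list v y \<Longrightarrow> \<exists>rest. braid_equiv op v (replicate j y @ rest)"
proof (induction j arbitrary: v)
  case 0 thus ?case by (intro exI[of _ v]) simp
next
  case (Suc j)
  have "y \<in> set v" using Suc.prems count_list_0_iff[of v y] by auto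
  then obtain p s where v: "v = p @ y # s" "y \<notin> set p" using split_list_first by metis
  have cp: "count_list p y = 0" using v(2) count_list_0_iff by metis
  have "count_list v y = Suc (count_list s y)" using v cp by simp
  hence "j \<le> count_list (map (\<lambda>z. op z y) p @ s) y" using Suc.prems by simp
  then obtain rest where r: "braid_equiv op (map (\<lambda>z. op z y) p @ s) (replicate j y @ rest)"
    using Suc.IH by blast
  have "braid_equiv op ((p @ [y]) @ s) ((y # map (\<lambda>z. op z y) p) @ s)"
    using L2 be_appR by blast
  moreover have "braid_equiv op (y # (map (\<lambda>z. op z y) p @ s)) (y # (replicate j y @ rest))"
    using r be_cons by blast
  ultimately have "braid_equiv op v (replicate (Suc j) y @ rest)" using v be_trans by simp
  thus ?case by blast
qed

lemma cnt_sum: "cnt C v = (\<Sum>y\<in>C. count_list v y)"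
proof (induction v)
  case Nil thus ?case by (simp add: cnt_def)
next
  case (Cons a v)
  have "(\<Sum>y\<in>C. count_list (a # v) y) = (\<Sum>y\<in>C. count_list v y + (if a = y then 1 else 0))"
    by (intro sum.cong) auto
  also have "\<dots> = (\<Sum>y\<in>C. count_list v y) + (\<Sum>y\<in>C. (if a = y then 1 else 0))"
    by (simp add: sum.distrib)
  also have "(\<Sum>y\<in>C. (if a = y then 1 else 0)) = (if a \<in> C then 1 else 0)"
    by (simp add: sum.delta)
  finally show ?case using Cons by (simp add: cnt_def)
qed

lemma pigeon: assumes "cnt C v \<ge> n * card (UNIV :: 'a set)" "n > 0"
  shows "\<exists>y\<in>C. count_list v y \<ge> n"
proof (rule ccontr)
  assume "\<not> ?thesis"
  hence "\<forall>y\<in>C. count_list v y \<le> n - 1" by auto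
  hence "(\<Sum>y\<in>C. count_list v y) \<le> (\<Sum>y\<in>C. n - 1)" by (intro sum_mono) auto
  also have "\<dots> = card C * (n - 1)" by simp
  also have "\<dots> \<le> card (UNIV :: 'a set) * (n - 1)"
    by (intro mult_right_mono card_mono) auto
  also have "\<dots> < n * card (UNIV :: 'a set)"
    using assms(2) by (simp add: finite_UNIV_card_ge_0 algebra_simps)
  finally show False using assms(1) cnt_sum by simp
qed

definition rho :: "'a set \<Rightarrow> ('a \<times> 'a) set" where
  "rho S = {(z, op z s) | z s. s \<in> S}\<^sup>*"

lemma rho_step: "s \<in> S \<Longrightarrow> (a, b) \<in> rho S \<Longrightarrow> (a, op b s) \<in> rho S"
  unfolding rho_def by (rule rtrancl_into_rtrancl) auto

lemma rho_trans: "(a, b) \<in> rho S \<Longrightarrow> (b, c) \<in> rho S \<Longrightarrow> (a, c) \<in> rho S"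
  unfolding rho_def by (rule rtrancl_trans)

lemma rho_pow: "s \<in> S \<Longrightarrow> (z, ((\<lambda>x. op x s) ^^ n) z) \<in> rho S"
  by (induction n) (auto simp: rho_def intro: rho_step[unfolded rho_def])

lemma rho_conj: assumes "(s, b) \<in> rho S" "s \<in> S" shows "\<forall>z. (z, op z b) \<in> rho S"
  using assms(1) unfolding rho_def
proof (induction rule: rtrancl_induct)
  case base thus ?case using assms(2) by (auto intro: r_into_rtrancl)
next
  case (step b b')
  then obtain t where t: "b' = op b t" "t \<in> S" by blast
  show ?case
  proof
    fix z
    define z0 where "z0 = ((\<lambda>x. op x t) ^^ (UK - 1)) z"
    have "(z, z0) \<in> rho S" unfolding z0_def using rho_pow t(2) by blast
    moreover have "(z0, op z0 b) \<in> rho S" using step.IH unfolding rho_def by blast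
    moreover have "op (op z0 b) t = op z (op b t)"
      using rack_ax[of z0 b t] phi_inv2 unfolding z0_def by simp
    ultimately have "(z, op z (op b t)) \<in> rho S" using rho_step t(2) rho_trans by metis
    thus "(z, op z b') \<in> {(z, op z s) |z s. s \<in> S}\<^sup>*" using t unfolding rho_def by simp
  qed
qed

lemma gen_rho: assumes "generates op w" shows "comp_rel op \<subseteq> rho (set w)"
proof -
  define Y where "Y = {b. \<exists>s\<in>set w. (s, b) \<in> rho (set w)}"
  have sY: "set w \<subseteq> Y" unfolding Y_def rho_def by auto
  have cY: "\<forall>a\<in>Y. \<forall>b\<in>Y. op a b \<in> Y"
  proof (intro ballI)
    fix a b assume "a \<in> Y" "b \<in> Y"
    then obtain s1 s2 where "s1 \<in> set w" "(s1, a) \<in> rho (set w)" "s2 \<in> set w" "(s2, b) \<in> rho (set w)"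
      unfolding Y_def by blast
    thus "op a b \<in> Y" unfolding Y_def using rho_conj rho_trans by blast
  qed
  have "Y = UNIV" using assms sY cY unfolding generates_def by blast
  hence all: "(z, op z b) \<in> rho (set w)" for z b
    using rho_conj unfolding Y_def by blast
  have powb: "(z, ((\<lambda>x. op x b) ^^ n) z) \<in> rho (set w)" for z b n
    by (induction n) (auto simp: rho_def intro: rtrancl_trans[OF _ all[unfolded rho_def]])
  have bk: "(op z b, z) \<in> rho (set w)" for z b
    using powb[where z="op z b" and b=b and n="UK - 1"] phi_inv by simp
  have "{(x, op x y) | x y. True} \<union> {(x, op x y) | x y. True}\<inverse> \<subseteq> rho (set w)"
    using all bk by auto
  hence "({(x, op x y) | x y. True} \<union> {(x, op x y) | x y. True}\<inverse>)\<^sup>* \<subseteq> (rho (set w))\<^sup>*"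
    by (rule rtrancl_mono)
  also have "(rho (set w))\<^sup>* = rho (set w)" unfolding rho_def by simp
  finally show ?thesis unfolding comp_rel_def Let_def .
qed

lemma central: "braid_equiv op (q @ replicate UK z) (replicate UK z @ q)"
proof -
  have "dact (replicate UK z) = id" using dact_replicate phi_UK by (auto simp: fun_eq_iff)
  thus ?thesis using Lq[of q "replicate UK z"] by simp
qed

lemma bij_dact: "bij (dact p)"
proof (induction p)
  case Nil thus ?case by (simp add: id_def[symmetric])
next
  case (Cons c p)
  have "dact (c # p) = dact p \<circ> (\<lambda>x. op x c)" by (auto simp: fun_eq_iff)
  thus ?case using Cons rack_bij bij_comp by metis
qed

lemma surj_core:
  assumes v: "braid_equiv op v (replicate UK y @ w)" and w: "w = replicate UK y @ rest"
    and g: "generates op v" and yx: "(y, x) \<in> comp_rel op"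
  shows "\<exists>u. braid_equiv op v (x # u) \<and> generates op u"
proof -
  define Good where "Good z \<longleftrightarrow> braid_equiv op v (replicate UK z @ w)" for z
  have A: "Good (dact p z)" if AG: "Good z" "w = p @ q" for z p q
  proof -
    have "braid_equiv op (replicate UK z @ p) (p @ replicate UK (dact p z))"
      using Lq[of "replicate UK z" p] by (simp add: map_replicate)
    moreover have "braid_equiv op (p @ replicate UK (dact p z)) (replicate UK (dact p z) @ p)"
      by (rule central)
    ultimately have "braid_equiv op (replicate UK z @ p) (replicate UK (dact p z) @ p)"
      using be_trans by blast
    hence "braid_equiv op ((replicate UK z @ p) @ q) ((replicate UK (dact p z) @ p) @ q)"
      by (rule be_appR)
    thus ?thesis using AG be_trans unfolding Good_def by simp
  qed
  have B: "Good (op z s)" if BG: "Good z" "s \<in> set w" for z s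
  proof -
    obtain p q where pq: "w = p @ s # q" using split_list[OF BG(2)] by blast
    have Gn: "Good (((dact p) ^^ n) z)" for n
      by (induction n) (use BG(1) A pq in auto)
    have "Good (dact (p @ [s]) (((dact p) ^^ (UK - 1)) z))"
      by (rule A[OF Gn]) (simp add: pq)
    moreover have "dact p (((dact p) ^^ (UK - 1)) z) = ((dact p) ^^ (Suc (UK - 1))) z" by simp
    moreover have "Suc (UK - 1) = UK" using UK_pos by simp
    ultimately show ?thesis using UK_pow[OF bij_dact] by simp
  qed
  have C: "(a, b) \<in> rho (set w) \<Longrightarrow> Good a \<Longrightarrow> Good b" for a b
    unfolding rho_def
  proof (induction rule: rtrancl_induct)
    case base thus ?case .
  next
    case (step b c) thus ?case using B by blast
  qed
  have "generates op (replicate UK y @ w)" using gen_be[OF v] g by simp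
  moreover have "set (replicate UK y @ w) = set w" using w UK_pos by auto
  ultimately have "generates op w" using gen_mono by blast
  hence "(y, x) \<in> rho (set w)" using gen_rho yx by blast
  moreover have "Good y" using v unfolding Good_def .
  ultimately have "Good x" using C by blast
  hence "braid_equiv op v (x # (replicate (UK - 1) x @ w))"
    unfolding Good_def using UK_pos by (cases UK) auto
  moreover have "generates op (replicate (UK - 1) x @ w)"
    using \<open>generates op w\<close> gen_mono by fastforce
  ultimately show ?thesis by blast
qed

lemma surj_x:
  assumes g: "generates op v" and C: "C \<in> comps" "x \<in> C"
    and c: "cnt C v \<ge> 2 * UK * card (UNIV :: 'a set)"
  shows "\<exists>u. braid_equiv op v (x # u) \<and> generates op u"
proof -
  obtain y where y: "y \<in> C" "count_list v y \<ge> 2 * UK"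
    using pigeon[of "2 * UK" C v] c UK_pos by auto
  obtain rest where r: "braid_equiv op v (replicate (2 * UK) y @ rest)"
    using gather y(2) by blast
  have "replicate (2 * UK) y @ rest = replicate UK y @ (replicate UK y @ rest)"
    by (simp add: mult_2 replicate_add)
  moreover have "(y, x) \<in> comp_rel op"
  proof -
    obtain c0 where "C = comp_rel op `` {c0}"
      using C(1) unfolding rack_components_def quotient_def by blast
    thus ?thesis using y(1) C(2) equiv_comp by (meson Image_singleton_iff equivE symD transD)
  qed
  ultimately show ?thesis using surj_core[OF _ refl g] r by metis
qed


lemma bc_eq: "braid_class op xs = braid_class op ys \<longleftrightarrow> braid_equiv op xs ys"
proof
  assume "braid_class op xs = braid_class op ys"
  hence "ys \<in> braid_class op xs" unfolding braid_class_def by auto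
  thus "braid_equiv op xs ys" unfolding braid_class_def by simp
next
  assume "braid_equiv op xs ys"
  thus "braid_class op xs = braid_class op ys"
    unfolding braid_class_def using be_sym be_trans by blast
qed

lemma sg_mult_class: "sg_mult op (braid_class op u) (braid_class op v) = braid_class op (u @ v)"
proof -
  have "{braid_class op (u' @ v') | u' v'. u' \<in> braid_class op u \<and> v' \<in> braid_class op v}
        = {braid_class op (u @ v)}"
  proof (rule set_eqI, rule iffI)
    fix c assume "c \<in> {braid_class op (u' @ v') | u' v'. u' \<in> braid_class op u \<and> v' \<in> braid_class op v}"
    then obtain u' v' where c: "c = braid_class op (u' @ v')" "braid_equiv op u u'" "braid_equiv op v v'"
      unfolding braid_class_def by blast
    have "braid_equiv op (u @ v) (u' @ v)" using c(2) be_appR by blast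
    moreover have "braid_equiv op (u' @ v) (u' @ v')" using c(3) be_appL by blast
    ultimately have "braid_equiv op (u @ v) (u' @ v')" using be_trans by blast
    hence "braid_class op (u @ v) = braid_class op (u' @ v')" using bc_eq by simp
    thus "c \<in> {braid_class op (u @ v)}" using c(1) by simp
  next
    fix c assume "c \<in> {braid_class op (u @ v)}"
    moreover have "u \<in> braid_class op u" "v \<in> braid_class op v" by (simp_all add: braid_class_def)
    ultimately show "c \<in> {braid_class op (u' @ v') | u' v'. u' \<in> braid_class op u \<and> v' \<in> braid_class op v}"
      by blast
  qed
  thus ?thesis unfolding sg_mult_def by simp
qed

definition T :: "('a set \<Rightarrow> nat) \<Rightarrow> 'a list set set" where
  "T d = {braid_class op xs | xs. generates op xs \<and> deg xs = d}"

definition Lx :: "'a \<Rightarrow> 'a list set \<Rightarrow> 'a list set" where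
  "Lx x c = sg_mult op (braid_class op [x]) c"

lemma Lx_class: "Lx x (braid_class op u) = braid_class op (x # u)"
  unfolding Lx_def using sg_mult_class[of "[x]" u] by simp

lemma finite_T: "finite (T d)"
proof -
  have "T d \<subseteq> braid_class op ` {xs. set xs \<subseteq> UNIV \<and> length xs \<le> (\<Sum>C\<in>comps. d C)}"
    unfolding T_def using length_deg by auto
  moreover have "finite {xs :: 'a list. set xs \<subseteq> UNIV \<and> length xs \<le> (\<Sum>C\<in>comps. d C)}"
    by (rule finite_lists_length_le) simp
  ultimately show ?thesis using finite_surj by blast
qed

definition DB :: nat where "DB = 2 * UK * card (UNIV :: 'a set)"

definition DD :: "('a set \<Rightarrow> nat) set" where
  "DD = {d. (\<forall>C\<in>comps. d C \<ge> DB) \<and> (\<forall>C. C \<notin> comps \<longrightarrow> d C = 0)}"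

lemma deg_out: "C \<notin> comps \<Longrightarrow> deg xs C = 0"
  unfolding deg_def by simp

lemma image_T: assumes d: "d \<in> DD" and C0: "C0 \<in> comps" "x \<in> C0"
  shows "Lx x ` T d = T (d(C0 := d C0 + 1))"
proof (rule set_eqI, rule iffI)
  fix c assume "c \<in> Lx x ` T d"
  then obtain xs where xs: "c = Lx x (braid_class op xs)" "generates op xs" "deg xs = d"
    unfolding T_def by blast
  have "generates op (x # xs)" by (rule gen_mono[OF xs(2)]) auto
  moreover have "deg (x # xs) = d(C0 := d C0 + 1)" using deg_cons[OF C0] xs(3) by simp
  ultimately show "c \<in> T (d(C0 := d C0 + 1))" unfolding T_def xs(1) Lx_class by blast
next
  fix c assume "c \<in> T (d(C0 := d C0 + 1))"
  then obtain v where v: "c = braid_class op v" "generates op v" "deg v = d(C0 := d C0 + 1)"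
    unfolding T_def by blast
  have "deg v C0 = d C0 + 1" using fun_cong[OF v(3), of C0] by simp
  hence "cnt C0 v = d C0 + 1" using C0(1) by (simp add: deg_def)
  moreover have "d C0 \<ge> DB" using d C0(1) unfolding DD_def by blast
  ultimately have "cnt C0 v \<ge> 2 * UK * card (UNIV :: 'a set)" unfolding DB_def by simp
  then obtain u where u: "braid_equiv op v (x # u)" "generates op u" using surj_x v(2) C0 by blast
  have "deg v = deg (x # u)" using deg_be[OF u(1)] .
  also have "\<dots> = (deg u)(C0 := deg u C0 + 1)" using deg_cons[OF C0] .
  finally have e: "(deg u)(C0 := deg u C0 + 1) = d(C0 := d C0 + 1)" using v(3) by simp
  have "deg u = d"
  proof
    fix C show "deg u C = d C" using fun_cong[OF e, of C] by (cases "C = C0") auto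
  qed
  hence "braid_class op u \<in> T d" using u(2) unfolding T_def by blast
  moreover have "c = Lx x (braid_class op u)" using v(1) u(1) bc_eq Lx_class by simp
  ultimately show "c \<in> Lx x ` T d" by blast
qed

lemma DD_step: "d \<in> DD \<Longrightarrow> C0 \<in> comps \<Longrightarrow> d(C0 := d C0 + 1) \<in> DD"
  unfolding DD_def by auto

lemma comp_ne: "C \<in> comps \<Longrightarrow> \<exists>x. x \<in> C"
proof -
  assume "C \<in> comps"
  then obtain c where "C = comp_rel op `` {c}" unfolding rack_components_def quotient_def by blast
  thus ?thesis using comp_of(2) by blast
qed

lemma card_mono_T: assumes "d \<in> DD" "C0 \<in> comps"
  shows "card (T (d(C0 := d C0 + 1))) \<le> card (T d)"
proof -
  obtain x where x: "x \<in> C0" using comp_ne assms(2) by blast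
  have "card (Lx x ` T d) \<le> card (T d)" by (rule card_image_le[OF finite_T])
  thus ?thesis using image_T[OF assms(1,2) x] by simp
qed

definition dstar :: "'a set \<Rightarrow> nat" where
  "dstar = (SOME d. d \<in> DD \<and> (\<forall>d'. d' \<in> DD \<longrightarrow> card (T d) \<le> card (T d')))"

lemma dstar: "dstar \<in> DD" "d' \<in> DD \<Longrightarrow> card (T dstar) \<le> card (T d')"
proof -
  have "(\<lambda>C. if C \<in> comps then DB else 0) \<in> DD" unfolding DD_def by auto
  hence "\<exists>d. d \<in> DD \<and> (\<forall>d'. d' \<in> DD \<longrightarrow> card (T d) \<le> card (T d'))"
    using ex_has_least_nat[where P="\<lambda>d. d \<in> DD" and m="\<lambda>d. card (T d)"] by blast
  hence "dstar \<in> DD \<and> (\<forall>d'. d' \<in> DD \<longrightarrow> card (T dstar) \<le> card (T d'))"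
    unfolding dstar_def by (rule someI_ex)
  thus "dstar \<in> DD" "d' \<in> DD \<Longrightarrow> card (T dstar) \<le> card (T d')" by auto
qed

lemma le_star_aux: "\<forall>d. d \<in> DD \<longrightarrow> (\<forall>C\<in>comps. dstar C \<le> d C) \<longrightarrow>
    (\<Sum>C\<in>comps. d C - dstar C) = n \<longrightarrow> card (T d) \<le> card (T dstar)"
proof (induction n)
  case 0
  show ?case
  proof (intro allI impI)
    fix d assume d: "d \<in> DD" "\<forall>C\<in>comps. dstar C \<le> d C" "(\<Sum>C\<in>comps. d C - dstar C) = 0"
    have "\<forall>C\<in>comps. d C - dstar C = 0" using d(3) finite_comps by simp
    have "d = dstar"
    proof
      fix C show "d C = dstar C"
      proof (cases "C \<in> comps")
        case True
        hence "d C - dstar C = 0" "dstar C \<le> d C" using \<open>\<forall>C\<in>comps. d C - dstar C = 0\<close> d(2) by auto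
        thus ?thesis by simp
      next
        case False
        thus ?thesis using d(1) dstar(1) unfolding DD_def by auto
      qed
    qed
    thus "card (T d) \<le> card (T dstar)" by simp
  qed
next
  case (Suc n)
  show ?case
  proof (intro allI impI)
    fix d assume d: "d \<in> DD" "\<forall>C\<in>comps. dstar C \<le> d C" "(\<Sum>C\<in>comps. d C - dstar C) = Suc n"
    have "\<not> (\<forall>C\<in>comps. d C - dstar C = 0)"
    proof
      assume "\<forall>C\<in>comps. d C - dstar C = 0"
      hence "(\<Sum>C\<in>comps. d C - dstar C) = 0" by simp
      thus False using d(3) by simp
    qed
    then obtain C where C: "C \<in> comps" "d C - dstar C \<noteq> 0" by blast
    define d' where "d' = d(C := d C - 1)"
    have "dstar C \<ge> DB" using dstar(1) C(1) unfolding DD_def by blast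
    hence d'D: "d' \<in> DD" using d(1) C unfolding DD_def d'_def by auto
    have d'le: "\<forall>C\<in>comps. dstar C \<le> d' C" using d(2) C unfolding d'_def by auto
    have "(\<Sum>C'\<in>comps. d C' - dstar C') = (d C - dstar C) + (\<Sum>C'\<in>comps - {C}. d C' - dstar C')"
      using C(1) finite_comps by (simp add: sum.remove)
    moreover have "(\<Sum>C'\<in>comps. d' C' - dstar C') = (d' C - dstar C) + (\<Sum>C'\<in>comps - {C}. d' C' - dstar C')"
      using C(1) finite_comps by (simp add: sum.remove)
    moreover have "(\<Sum>C'\<in>comps - {C}. d' C' - dstar C') = (\<Sum>C'\<in>comps - {C}. d C' - dstar C')"
      unfolding d'_def by (intro sum.cong) auto
    moreover have "d' C - dstar C = d C - dstar C - 1" unfolding d'_def by simp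
    ultimately have "(\<Sum>C'\<in>comps. d' C' - dstar C') = n" using d(3) C(2) by simp
    hence "card (T d') \<le> card (T dstar)" using Suc.IH d'D d'le by blast
    moreover have "d = d'(C := d' C + 1)" unfolding d'_def using C(2) by auto
    ultimately show "card (T d) \<le> card (T dstar)" using card_mono_T[OF d'D C(1)] by simp
  qed
qed

lemma card_star: assumes "d \<in> DD" "\<forall>C\<in>comps. dstar C \<le> d C" shows "card (T d) = card (T dstar)"
proof -
  have "card (T d) \<le> card (T dstar)" using le_star_aux assms by blast
  moreover have "card (T dstar) \<le> card (T d)" using dstar(2)[OF assms(1)] .
  ultimately show ?thesis by simp
qed

lemma inj_Lx: assumes d: "d \<in> DD" "\<forall>C\<in>comps. dstar C \<le> d C" and C0: "C0 \<in> comps" "x \<in> C0"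
  shows "inj_on (Lx x) (T d)"
proof (rule eq_card_imp_inj_on[OF finite_T])
  have "card (Lx x ` T d) = card (T (d(C0 := d C0 + 1)))" using image_T[OF d(1) C0] by simp
  also have "\<dots> = card (T dstar)"
  proof (rule card_star[OF DD_step[OF d(1) C0(1)]])
    show "\<forall>C\<in>comps. dstar C \<le> (d(C0 := d C0 + 1)) C" using d(2) by auto
  qed
  also have "\<dots> = card (T d)" using card_star d by simp
  finally show "card (Lx x ` T d) = card (T d)" .
qed

definition N0 :: nat where "N0 = Max (dstar ` comps)"

lemma N0: "C \<in> comps \<Longrightarrow> dstar C \<le> N0"
  unfolding N0_def using finite_comps by simp

lemma cancel: "\<forall>v v'. generates op v \<longrightarrow> generates op v' \<longrightarrow> (\<forall>C\<in>comps. cnt C v \<ge> N0) \<longrightarrow>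
   (\<forall>C\<in>comps. cnt C v' \<ge> N0) \<longrightarrow> braid_equiv op (u @ v) (u @ v') \<longrightarrow> braid_equiv op v v'"
proof (induction u)
  case Nil thus ?case by simp
next
  case (Cons x u)
  show ?case
  proof (intro allI impI)
    fix v v' assume g: "generates op v" "generates op v'" and c: "\<forall>C\<in>comps. cnt C v \<ge> N0"
      "\<forall>C\<in>comps. cnt C v' \<ge> N0" and e: "braid_equiv op ((x # u) @ v) ((x # u) @ v')"
    let ?C0 = "comp_rel op `` {x}"
    have C0: "?C0 \<in> comps" "x \<in> ?C0" using comp_of by auto
    have "deg (x # (u @ v)) = deg (x # (u @ v'))" using deg_be e by simp
    hence e2: "(deg (u @ v))(?C0 := deg (u @ v) ?C0 + 1) = (deg (u @ v'))(?C0 := deg (u @ v') ?C0 + 1)"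
      using deg_cons[OF C0] by simp
    have dd: "deg (u @ v) = deg (u @ v')"
    proof
      fix C show "deg (u @ v) C = deg (u @ v') C" using fun_cong[OF e2, of C] by (cases "C = ?C0") auto
    qed
    define d where "d = deg (u @ v)"
    have ge: "\<forall>C\<in>comps. dstar C \<le> d C"
    proof
      fix C assume C: "C \<in> comps"
      have "d C = deg u C + cnt C v" unfolding d_def deg_append using C by (simp add: deg_def)
      moreover have "cnt C v \<ge> N0" using c(1) C by blast
      ultimately show "dstar C \<le> d C" using N0[OF C] by linarith
    qed
    have dD: "d \<in> DD" unfolding DD_def
    proof (intro CollectI conjI ballI allI impI)
      fix C assume C: "C \<in> comps"
      have "DB \<le> dstar C" using dstar(1) C unfolding DD_def by blast
      thus "DB \<le> d C" using ge C by (meson order_trans)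
    next
      fix C assume "C \<notin> comps" thus "d C = 0" unfolding d_def by (rule deg_out)
    qed
    have g1: "generates op (u @ v)" "generates op (u @ v')"
      by (rule gen_mono[OF g(1)], simp) (rule gen_mono[OF g(2)], simp)
    have T1: "braid_class op (u @ v) \<in> T d" "braid_class op (u @ v') \<in> T d"
      using g1 dd unfolding T_def d_def by auto
    have "Lx x (braid_class op (u @ v)) = Lx x (braid_class op (u @ v'))"
      using e Lx_class bc_eq by simp
    hence "braid_class op (u @ v) = braid_class op (u @ v')"
      using inj_onD[OF inj_Lx[OF dD ge C0] _ T1(1) T1(2)] by blast
    hence "braid_equiv op (u @ v) (u @ v')" using bc_eq by simp
    thus "braid_equiv op v v'" using Cons.IH g c by blast
  qed
qed

lemma cnt_card: "card {i. i < length xs \<and> xs ! i \<in> C} = cnt C xs"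
  unfolding cnt_def by (simp add: length_filter_conv_card)

lemma main: "\<exists>N0. \<forall>N\<ge>N0. \<forall>w\<in>structure_semigroup op.
           (\<forall>z\<in>SX_star op N. sg_mult op w z \<in> SX_star op N) \<and>
           inj_on (sg_mult op w) (SX_star op N)"
proof (intro exI[of _ N0] allI impI ballI conjI)
  fix N w assume N: "N0 \<le> N" and w: "w \<in> structure_semigroup op"
  obtain u where u: "w = braid_class op u" "u \<noteq> []" using w unfolding structure_semigroup_def by blast
  show "sg_mult op w z \<in> SX_star op N" if z: "z \<in> SX_star op N" for z
  proof -
    obtain v where v: "z = braid_class op v" "v \<noteq> []" "generates op v"
      "\<forall>C\<in>comps. card {i. i < length v \<and> v ! i \<in> C} \<ge> N"
      using z unfolding SX_star_def by blast
    have "generates op (u @ v)" by (rule gen_mono[OF v(3)]) simp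
    moreover have "\<forall>C\<in>comps. card {i. i < length (u @ v) \<and> (u @ v) ! i \<in> C} \<ge> N"
    proof
      fix C assume C: "C \<in> comps"
      have "cnt C (u @ v) \<ge> cnt C v" by (simp add: cnt_def)
      moreover have "cnt C v \<ge> N" using v(4) C unfolding cnt_card by blast
      ultimately show "N \<le> card {i. i < length (u @ v) \<and> (u @ v) ! i \<in> C}"
        unfolding cnt_card by linarith
    qed
    ultimately show ?thesis unfolding SX_star_def u(1) v(1) sg_mult_class using v(2) by blast
  qed
  show "inj_on (sg_mult op w) (SX_star op N)"
  proof (rule inj_onI)
    fix z1 z2 assume z1: "z1 \<in> SX_star op N" and z2: "z2 \<in> SX_star op N"
      and e: "sg_mult op w z1 = sg_mult op w z2"
    obtain v1 where v1: "z1 = braid_class op v1" "generates op v1"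
      "\<forall>C\<in>comps. card {i. i < length v1 \<and> v1 ! i \<in> C} \<ge> N"
      using z1 unfolding SX_star_def by blast
    obtain v2 where v2: "z2 = braid_class op v2" "generates op v2"
      "\<forall>C\<in>comps. card {i. i < length v2 \<and> v2 ! i \<in> C} \<ge> N"
      using z2 unfolding SX_star_def by blast
    have "braid_equiv op (u @ v1) (u @ v2)" using e unfolding u(1) v1(1) v2(1) sg_mult_class bc_eq .
    moreover have "\<forall>C\<in>comps. cnt C v1 \<ge> N0" "\<forall>C\<in>comps. cnt C v2 \<ge> N0"
      using v1(3) v2(3) N unfolding cnt_card by (meson order_trans)+
    ultimately have "braid_equiv op v1 v2" using cancel v1(2) v2(2) by blast
    thus "z1 = z2" using v1(1) v2(1) bc_eq by simp
  qed
qed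
end

theorem corollary4p23:
  fixes op :: "'a::finite \<Rightarrow> 'a \<Rightarrow> 'a"
  assumes "is_rack op"
  shows "\<exists>N0. \<forall>N\<ge>N0. \<forall>w\<in>structure_semigroup op.
           (\<forall>z\<in>SX_star op N. sg_mult op w z \<in> SX_star op N) \<and>
           inj_on (sg_mult op w) (SX_star op N)"
  using main[OF assms] .

end
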